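(* Let $H$ be a separable complex Hilbert space, $(\Omega,\mu)$ a measure space with positive measure, and let $K\in B(H)$ have closed range. If $F:\Omega\to H$ is a Parseval continuous $K$-frame of $H$, then $K^{\dagger}F$ (i.e. $\omega\mapsto K^{\dagger}F(\omega)$) is a dual continuous $K$-Bessel sequence of $F$.
   Context: A map $F:\Omega\to H$ is weakly measurable if $\omega\mapsto\langle f,F(\omega)\rangle$ is measurable for every $f\in H$. A continuous Bessel sequence is a weakly measurable $G:\Omega\to H$ with $\int_\Omega|\langle f,G(\omega)\rangle|^2\,d\mu(\omega)\le B\|f\|^2$ for all $f\in H$, for some $B>0$. A Parseval continuous $K$-frame is a weakly measurable $F$ with $\int_\Omega|\langle f,F(\omega)\rangle|^2\,d\mu(\omega)=\|K^{\ast}f\|^2$ for all $f\in H$. A dual continuous $K$-Bessel sequence of $F$ is a continuous Bessel sequence $G$ such that $Kf=\int_\Omega\langle f,G(\omega)\rangle F(\omega)\,d\mu(\omega)$ for all $f\in H$ (weak integral). For $K$ with closed range, $K^{\dagger}\in B(H)$ denotes its Moore–Penrose pseudo-inverse, the unique operator with $KK^\dagger K=K$, $K^\dagger KK^\dagger=K^\dagger$, and $KK^\dagger$, $K^\dagger K$ self-adjoint. *)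

theory Defs
  imports "HOL-Analysis.Analysis"
begin

text \<open>The HOL library only has real inner product spaces, so complex inner
product spaces are introduced here as type classes. The inner product is
linear in the first argument and conjugate-linear in the second.\<close>

class complex_vector = real_vector +
  fixes scaleC :: "complex \<Rightarrow> 'a \<Rightarrow> 'a"  (infixr \<open>*\<^sub>C\<close> 75)
  assumes scaleC_add_right: "a *\<^sub>C (x + y) = a *\<^sub>C x + a *\<^sub>C y"
    and scaleC_add_left: "(a + b) *\<^sub>C x = a *\<^sub>C x + b *\<^sub>C x"
    and scaleC_scaleC: "a *\<^sub>C (b *\<^sub>C x) = (a * b) *\<^sub>C x"
    and scaleC_one: "1 *\<^sub>C x = x"
    and scaleR_scaleC: "scaleR r x = complex_of_real r *\<^sub>C x"

class complex_inner = complex_vector + real_normed_vector +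
  fixes cinner :: "'a \<Rightarrow> 'a \<Rightarrow> complex"
  assumes cinner_commute: "cinner x y = cnj (cinner y x)"
    and cinner_add_left: "cinner (x + y) z = cinner x z + cinner y z"
    and cinner_scaleC_left: "cinner (c *\<^sub>C x) y = c * cinner x y"
    and cinner_nonneg: "0 \<le> Re (cinner x x)"
    and norm_eq_sqrt_cinner: "norm x = sqrt (Re (cinner x x))"

class chilbert_space = complex_inner + complete_space

instantiation complex :: complex_vector
begin
definition scaleC_complex :: "complex \<Rightarrow> complex \<Rightarrow> complex" where
  "scaleC_complex a x = a * x"
instance
  apply standard
  apply (simp_all add: scaleC_complex_def algebra_simps scaleR_conv_of_real)
  done
end
instantiation complex :: complex_inner
begin
definition cinner_complex :: "complex \<Rightarrow> complex \<Rightarrow> complex" where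
  "cinner_complex x y = x * cnj y"
instance
proof
  fix x y z :: complex and c
  show "cinner x y = cnj (cinner y x)" by (simp add: cinner_complex_def)
  show "cinner (x + y) z = cinner x z + cinner y z" by (simp add: cinner_complex_def algebra_simps)
  show "cinner (c *\<^sub>C x) y = c * cinner x y" by (simp add: cinner_complex_def scaleC_complex_def)
  show "0 \<le> Re (cinner x x)" by (simp add: cinner_complex_def complex_mult_cnj)
  show "norm x = sqrt (Re (cinner x x))" by (simp add: cinner_complex_def complex_mult_cnj cmod_def)
qed
end
instance complex :: chilbert_space ..

definition bounded_clinear_op :: "('a::complex_inner \<Rightarrow> 'b::complex_inner) \<Rightarrow> bool" where
  "bounded_clinear_op T \<longleftrightarrow>
     (\<forall>x y. T (x + y) = T x + T y) \<and> (\<forall>c x. T (c *\<^sub>C x) = c *\<^sub>C T x) \<and>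
     (\<exists>B. \<forall>x. norm (T x) \<le> B * norm x)"

definition is_adjoint :: "('a::complex_inner \<Rightarrow> 'b::complex_inner) \<Rightarrow> ('b \<Rightarrow> 'a) \<Rightarrow> bool" where
  "is_adjoint T A \<longleftrightarrow> (\<forall>x y. cinner (T x) y = cinner x (A y))"

definition self_adjoint :: "('a::complex_inner \<Rightarrow> 'a) \<Rightarrow> bool" where
  "self_adjoint T \<longleftrightarrow> is_adjoint T T"

definition is_MP_pseudo_inverse :: "('a::complex_inner \<Rightarrow> 'a) \<Rightarrow> ('a \<Rightarrow> 'a) \<Rightarrow> bool" where
  "is_MP_pseudo_inverse K Kd \<longleftrightarrow>
     bounded_clinear_op Kd \<and> K \<circ> Kd \<circ> K = K \<and> Kd \<circ> K \<circ> Kd = Kd \<and>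
     self_adjoint (K \<circ> Kd) \<and> self_adjoint (Kd \<circ> K)"

definition weakly_measurable :: "'w measure \<Rightarrow> ('w \<Rightarrow> 'h::complex_inner) \<Rightarrow> bool" where
  "weakly_measurable M F \<longleftrightarrow> (\<forall>f. (\<lambda>\<omega>. cinner f (F \<omega>)) \<in> borel_measurable M)"

definition cont_bessel :: "'w measure \<Rightarrow> ('w \<Rightarrow> 'h::complex_inner) \<Rightarrow> bool" where
  "cont_bessel M G \<longleftrightarrow> weakly_measurable M G \<and>
     (\<exists>B>0. \<forall>f. (\<integral>\<^sup>+\<omega>. ennreal ((cmod (cinner f (G \<omega>)))\<^sup>2) \<partial>M) \<le> ennreal (B * (norm f)\<^sup>2))"

text \<open>Parseval continuous K-frame; Ks is the adjoint K* of K.\<close>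
definition parseval_cont_K_frame ::
    "'w measure \<Rightarrow> ('h::complex_inner \<Rightarrow> 'h) \<Rightarrow> ('w \<Rightarrow> 'h) \<Rightarrow> bool" where
  "parseval_cont_K_frame M Ks F \<longleftrightarrow> weakly_measurable M F \<and>
     (\<forall>f. (\<integral>\<^sup>+\<omega>. ennreal ((cmod (cinner f (F \<omega>)))\<^sup>2) \<partial>M) = ennreal ((norm (Ks f))\<^sup>2))"

text \<open>K f equals the weak integral of \<omega> \<mapsto> <f, G \<omega>> F \<omega>: for every h the scalar function
  \<omega> \<mapsto> <f, G \<omega>> <F \<omega>, h> is integrable with integral <K f, h>.\<close>
definition weak_integral_repr ::
    "'w measure \<Rightarrow> ('h::complex_inner \<Rightarrow> 'h) \<Rightarrow> ('w \<Rightarrow> 'h) \<Rightarrow> ('w \<Rightarrow> 'h) \<Rightarrow> bool" where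
  "weak_integral_repr M K F G \<longleftrightarrow> (\<forall>f h.
     integrable M (\<lambda>\<omega>. cinner f (G \<omega>) * cinner (F \<omega>) h) \<and>
     cinner (K f) h = (\<integral>\<omega>. cinner f (G \<omega>) * cinner (F \<omega>) h \<partial>M))"

definition dual_cont_K_bessel ::
    "'w measure \<Rightarrow> ('h::complex_inner \<Rightarrow> 'h) \<Rightarrow> ('w \<Rightarrow> 'h) \<Rightarrow> ('w \<Rightarrow> 'h) \<Rightarrow> bool" where
  "dual_cont_K_bessel M K F G \<longleftrightarrow> cont_bessel M G \<and> weak_integral_repr M K F G"

end

theory Submission
  imports Defs
begin

lemma cinner_add_right: "cinner x (y + z) = cinner x y + cinner (x::'a::complex_inner) z"
proof -
  have "cinner x (y+z) = cnj (cinner (y+z) x)" by (rule cinner_commute)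
  also have "\<dots> = cnj (cinner y x) + cnj (cinner z x)" by (simp add: cinner_add_left)
  also have "\<dots> = cinner x y + cinner x z" by (simp only: cinner_commute[of x y] cinner_commute[of x z])
  finally show ?thesis .
qed

lemma cinner_scaleC_right: "cinner x (c *\<^sub>C y) = cnj c * cinner (x::'a::complex_inner) y"
proof -
  have "cinner x (c *\<^sub>C y) = cnj (cinner (c *\<^sub>C y) x)" by (rule cinner_commute)
  also have "\<dots> = cnj c * cnj (cinner y x)" by (simp add: cinner_scaleC_left)
  also have "\<dots> = cnj c * cinner x y" by (simp only: cinner_commute[of x y])
  finally show ?thesis .
qed

lemma scaleC_zero_left: "(0::complex) *\<^sub>C (x::'a::complex_vector) = 0"
proof -
  have "(0::complex) *\<^sub>C x = complex_of_real 0 *\<^sub>C x" by simp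
  also have "\<dots> = 0 *\<^sub>R x" by (simp only: scaleR_scaleC)
  finally show ?thesis by simp
qed

lemma scaleC_minus1: "(-1::complex) *\<^sub>C (x::'a::complex_vector) = - x"
proof -
  have "(-1::complex) *\<^sub>C x = complex_of_real (-1) *\<^sub>C x" by simp
  also have "\<dots> = (-1) *\<^sub>R x" by (simp only: scaleR_scaleC)
  finally show ?thesis by simp
qed

lemma cinner_zero_left: "cinner 0 (x::'a::complex_inner) = 0"
proof -
  have "cinner 0 x = cinner ((0::complex) *\<^sub>C 0) x" by (simp only: scaleC_zero_left)
  also have "\<dots> = 0" by (simp only: cinner_scaleC_left mult_zero_left)
  finally show ?thesis .
qed

lemma cinner_zero_right: "cinner (x::'a::complex_inner) 0 = 0"
  using cinner_commute[of x 0] by (simp add: cinner_zero_left)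

lemma cinner_minus_left: "cinner (- x) (y::'a::complex_inner) = - cinner x y"
proof -
  have "cinner (- x) y = cinner ((-1::complex) *\<^sub>C x) y" by (simp only: scaleC_minus1)
  also have "\<dots> = - cinner x y" by (simp only: cinner_scaleC_left) simp
  finally show ?thesis .
qed

lemma cinner_diff_left: "cinner (x - y) (z::'a::complex_inner) = cinner x z - cinner y z"
  by (simp only: diff_conv_add_uminus cinner_add_left cinner_minus_left)

lemma cinner_minus_right: "cinner x (- (y::'a::complex_inner)) = - cinner x y"
proof -
  have "cinner x (- y) = cinner x ((-1::complex) *\<^sub>C y)" by (simp only: scaleC_minus1)
  also have "\<dots> = - cinner x y" by (simp only: cinner_scaleC_right) simp
  finally show ?thesis .
qed

lemma cinner_diff_right: "cinner x (y - (z::'a::complex_inner)) = cinner x y - cinner x z"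
  by (simp only: diff_conv_add_uminus cinner_add_right cinner_minus_right)

lemma cinner_self: "cinner x x = complex_of_real ((norm (x::'a::complex_inner))\<^sup>2)"
proof -
  have h: "Im (cinner x x) = Im (cnj (cinner x x))" by (rule arg_cong[OF cinner_commute])
  have h2: "Im (cnj (cinner x x)) = - Im (cinner x x)" by simp
  have "Im (cinner x x) = 0" using h h2 by linarith
  moreover have "Re (cinner x x) = (norm x)\<^sup>2"
    using norm_eq_sqrt_cinner[of x] cinner_nonneg[of x] by simp
  ultimately show ?thesis by (simp add: complex_eq_iff)
qed

lemma cinner_self_eq_0: "cinner x x = 0 \<longleftrightarrow> (x::'a::complex_inner) = 0"
  by (simp add: cinner_self)

lemma cinner_ext: "(\<And>x. cinner x a = cinner x (b::'a::complex_inner)) \<Longrightarrow> a = b"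
proof -
  assume h: "\<And>x. cinner x a = cinner x b"
  have "cinner (a - b) (a - b) = 0" using h[of "a-b"] by (simp add: cinner_diff_right)
  then show "a = b" by (simp add: cinner_self_eq_0)
qed

lemma norm_scaleC: "norm (c *\<^sub>C (x::'a::complex_inner)) = cmod c * norm x"
proof -
  have "complex_of_real ((norm (c *\<^sub>C x))\<^sup>2) = cinner (c *\<^sub>C x) (c *\<^sub>C x)"
    by (simp only: cinner_self)
  also have "\<dots> = (c * cnj c) * cinner x x"
    by (simp add: cinner_scaleC_left cinner_scaleC_right mult.assoc)
  also have "\<dots> = complex_of_real ((cmod c * norm x)\<^sup>2)"
    by (simp add: complex_mult_cnj cinner_self power_mult_distrib cmod_power2)
  finally have "complex_of_real ((norm (c *\<^sub>C x))\<^sup>2) = complex_of_real ((cmod c * norm x)\<^sup>2)" .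
  then have "(norm (c *\<^sub>C x))\<^sup>2 = (cmod c * norm x)\<^sup>2" using of_real_eq_iff by blast
  then show ?thesis by (simp add: power2_eq_iff_nonneg)
qed

lemma proj_norm:
  fixes x y :: "'a::complex_inner"
  assumes "y \<noteq> 0"
  shows "(norm (x - (cinner x y / complex_of_real ((norm y)\<^sup>2)) *\<^sub>C y))\<^sup>2
       = (norm x)\<^sup>2 - (cmod (cinner x y))\<^sup>2 / (norm y)\<^sup>2"
proof -
  define a where "a = cinner x y"
  define r where "r = (norm y)\<^sup>2"
  have r: "r > 0" using assms by (simp add: r_def)
  define c where "c = a / complex_of_real r"
  have yx: "cinner y x = cnj a" by (simp add: a_def cinner_commute[of y x])
  have "complex_of_real ((norm (x - c *\<^sub>C y))\<^sup>2) = cinner (x - c *\<^sub>C y) (x - c *\<^sub>C y)"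
    by (simp add: cinner_self)
  also have "\<dots> = cinner x x - cnj c * a - c * cnj a + c * cnj c * complex_of_real r"
    by (simp add: cinner_diff_left cinner_diff_right cinner_scaleC_left cinner_scaleC_right
        a_def[symmetric] yx r_def[symmetric] cinner_self[of y] algebra_simps)
  also have "\<dots> = cinner x x - (a * cnj a) / complex_of_real r"
  proof -
    have r0: "complex_of_real r \<noteq> 0" using r by simp
    have "cnj c = cnj a / complex_of_real r" by (simp add: c_def)
    then have "cinner x x - cnj c * a - c * cnj a + c * cnj c * complex_of_real r
       = cinner x x - (a * cnj a) / complex_of_real r - (a * cnj a) / complex_of_real r
         + (a * cnj a) / complex_of_real r"
      using r0 by (simp add: c_def)
    then show ?thesis by simp
  qed
  also have "\<dots> = complex_of_real ((norm x)\<^sup>2 - (cmod a)\<^sup>2 / r)"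
    by (simp add: complex_mult_cnj cinner_self cmod_power2)
  finally have "(norm (x - c *\<^sub>C y))\<^sup>2 = (norm x)\<^sup>2 - (cmod a)\<^sup>2 / r"
    by (simp only: of_real_eq_iff)
  then show ?thesis by (simp only: c_def a_def r_def)
qed

lemma cauchy_schwarz: "cmod (cinner x y) \<le> norm x * norm (y::'a::complex_inner)"
proof (cases "y = 0")
  case True then show ?thesis by (simp add: cinner_zero_right)
next
  case False
  have "0 \<le> (norm x)\<^sup>2 - (cmod (cinner x y))\<^sup>2 / (norm y)\<^sup>2"
    using proj_norm[OF False, of x] by (metis zero_le_power2)
  then have "(cmod (cinner x y))\<^sup>2 \<le> (norm x * norm y)\<^sup>2"
  proof -
    have p: "(norm y)\<^sup>2 > 0" using False by simp
    have "(cmod (cinner x y))\<^sup>2 / (norm y)\<^sup>2 \<le> (norm x)\<^sup>2" using \<open>0 \<le> _\<close> by linarith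
    then have "(cmod (cinner x y))\<^sup>2 \<le> (norm x)\<^sup>2 * (norm y)\<^sup>2"
      using p by (simp add: pos_divide_le_eq)
    then show ?thesis by (simp add: power_mult_distrib)
  qed
  then show ?thesis by (rule power2_le_imp_le) simp
qed

lemma cinner_self_Re: "Re (cinner x x) = (norm (x::'a::complex_inner))\<^sup>2"
  by (simp add: cinner_self)

lemma parallelogram:
  fixes y z :: "'a::complex_inner"
  shows "(norm (y + z))\<^sup>2 + (norm (y - z))\<^sup>2 = 2 * (norm y)\<^sup>2 + 2 * (norm z)\<^sup>2"
proof -
  have "cinner (y+z) (y+z) + cinner (y-z) (y-z) = 2 * cinner y y + 2 * cinner z z"
    by (simp add: cinner_add_left cinner_add_right cinner_diff_left cinner_diff_right)
  then have "Re (cinner (y+z) (y+z) + cinner (y-z) (y-z)) = Re (2 * cinner y y + 2 * cinner z z)"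
    by simp
  then show ?thesis by (simp add: cinner_self_Re)
qed

lemma riesz:
  fixes \<phi> :: "'a::chilbert_space \<Rightarrow> complex"
  assumes add: "\<And>x y. \<phi> (x + y) = \<phi> x + \<phi> y"
    and sc: "\<And>c x. \<phi> (c *\<^sub>C x) = c * \<phi> x"
    and bd: "\<And>x. cmod (\<phi> x) \<le> B * norm x"
  shows "\<exists>w. \<forall>x. \<phi> x = cinner x w"
proof (cases "\<forall>x. \<phi> x = 0")
  case True
  then show ?thesis by (intro exI[of _ 0]) (simp add: cinner_zero_right)
next
  case False
  then obtain x0 where x0: "\<phi> x0 \<noteq> 0" by blast
  have scR: "\<phi> (r *\<^sub>R x) = complex_of_real r * \<phi> x" for r x
    by (simp only: scaleR_scaleC sc)
  have phi0: "\<phi> 0 = 0" using scR[of 0 0] by simp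
  have diff: "\<phi> (x - y) = \<phi> x - \<phi> y" for x y
  proof -
    have "\<phi> (x - y) = \<phi> (x + (-1) *\<^sub>R y)" by simp
    also have "\<dots> = \<phi> x - \<phi> y" by (simp only: add scR) simp
    finally show ?thesis .
  qed
  have bl: "bounded_linear \<phi>"
  proof (rule bounded_linear_intro[where K = B])
    show "\<phi> (x + y) = \<phi> x + \<phi> y" for x y by (rule add)
    show "\<phi> (r *\<^sub>R x) = r *\<^sub>R \<phi> x" for r x by (simp add: scR scaleR_conv_of_real)
    show "norm (\<phi> x) \<le> norm x * B" for x using bd[of x] by (simp add: mult.commute)
  qed
  define A where "A = {y. \<phi> y = 1}"
  define S where "S = (\<lambda>y. (norm y)\<^sup>2) ` A"
  define d where "d = Inf S"
  have x1: "\<phi> ((1 / \<phi> x0) *\<^sub>C x0) = 1" using x0 by (simp add: sc)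
  have Sne: "S \<noteq> {}" using x1 by (auto simp: S_def A_def)
  have Sbdd: "bdd_below S" unfolding S_def by (rule bdd_belowI[of _ 0]) auto
  have dle: "d \<le> (norm y)\<^sup>2" if "\<phi> y = 1" for y
    unfolding d_def using that by (intro cInf_lower[OF _ Sbdd]) (auto simp: S_def A_def)
  have "\<forall>n. \<exists>y. \<phi> y = 1 \<and> (norm y)\<^sup>2 < d + 1 / real (Suc n)"
  proof
    fix n
    have "Inf S < d + 1 / real (Suc n)" unfolding d_def by simp
    from cInf_lessD[OF Sne this] show "\<exists>y. \<phi> y = 1 \<and> (norm y)\<^sup>2 < d + 1 / real (Suc n)"
      by (auto simp: S_def A_def)
  qed
  then obtain Y where Y1: "\<And>n. \<phi> (Y n) = 1"
    and Yn: "\<And>n. (norm (Y n))\<^sup>2 < d + 1 / real (Suc n)" by metis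
  have mid: "4 * d \<le> (norm (Y m + Y n))\<^sup>2" for m n
  proof -
    have "\<phi> ((1/2) *\<^sub>R (Y m + Y n)) = 1" by (simp add: scR add Y1)
    then have "d \<le> (norm ((1/2) *\<^sub>R (Y m + Y n)))\<^sup>2" by (rule dle)
    also have "\<dots> = (norm (Y m + Y n))\<^sup>2 / 4" by (simp add: power2_eq_square)
    finally show ?thesis by simp
  qed
  have dist: "(norm (Y m - Y n))\<^sup>2 \<le> 2 / real (Suc m) + 2 / real (Suc n)" for m n
    using parallelogram[of "Y m" "Y n"] mid[of m n] Yn[of m] Yn[of n] by linarith
  have "Cauchy Y"
  proof (rule CauchyI)
    fix e :: real assume e: "0 < e"
    obtain M :: nat where M: "4 / e\<^sup>2 < real M" using reals_Archimedean2 by blast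
    have e2: "0 < e\<^sup>2" using e by simp
    have "4 < real M * e\<^sup>2" using M e2 by (simp add: pos_divide_less_eq)
    moreover have "real M * e\<^sup>2 < real (Suc M) * e\<^sup>2" using e2 by simp
    ultimately have "4 < real (Suc M) * e\<^sup>2" by linarith
    then have M4: "4 / real (Suc M) < e\<^sup>2"
      by (subst pos_divide_less_eq) (simp_all add: mult.commute)
    show "\<exists>M. \<forall>m\<ge>M. \<forall>n\<ge>M. norm (Y m - Y n) < e"
    proof (intro exI allI impI)
      fix m n assume mM: "M \<le> m" and nM: "M \<le> n"
      have "2 / real (Suc m) \<le> 2 / real (Suc M)" using mM by (simp add: frac_le)
      moreover have "2 / real (Suc n) \<le> 2 / real (Suc M)" using nM by (simp add: frac_le)
      ultimately have "(norm (Y m - Y n))\<^sup>2 < e\<^sup>2" using dist[of m n] M4 by simp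
      then show "norm (Y m - Y n) < e" using e by (simp add: power_less_imp_less_base)
    qed
  qed
  then obtain z where Yz: "Y \<longlonglongrightarrow> z" using Cauchy_convergent convergent_def by blast
  have "(\<lambda>n. \<phi> (Y n)) \<longlonglongrightarrow> \<phi> z" by (rule bounded_linear.tendsto[OF bl Yz])
  then have z1: "\<phi> z = 1" using Y1 LIMSEQ_unique[OF _ tendsto_const] by simp
  have znorm: "(norm z)\<^sup>2 \<le> d"
  proof (rule LIMSEQ_le)
    show "(\<lambda>n. (norm (Y n))\<^sup>2) \<longlonglongrightarrow> (norm z)\<^sup>2" by (intro tendsto_intros Yz)
    have l0: "(\<lambda>n. 1 / real (Suc n)) \<longlonglongrightarrow> 0" using LIMSEQ_Suc[OF lim_1_over_n] by simp
    show "(\<lambda>n. d + 1 / real (Suc n)) \<longlonglongrightarrow> d" using tendsto_add[OF tendsto_const[of d] l0] by simp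
    show "\<exists>N. \<forall>n\<ge>N. (norm (Y n))\<^sup>2 \<le> d + 1 / real (Suc n)" using Yn less_imp_le by blast
  qed
  have zmin: "(norm z)\<^sup>2 \<le> (norm y)\<^sup>2" if "\<phi> y = 1" for y
    using znorm dle[OF that] by linarith
  have orth: "cinner z n = 0" if "\<phi> n = 0" for n
  proof (cases "n = 0")
    case True then show ?thesis by (simp add: cinner_zero_right)
  next
    case False
    define c where "c = cinner z n / complex_of_real ((norm n)\<^sup>2)"
    have "\<phi> (z - c *\<^sub>C n) = 1" by (simp add: diff sc that z1)
    then have "(norm z)\<^sup>2 \<le> (norm (z - c *\<^sub>C n))\<^sup>2" by (rule zmin)
    also have "\<dots> = (norm z)\<^sup>2 - (cmod (cinner z n))\<^sup>2 / (norm n)\<^sup>2"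
      unfolding c_def by (rule proj_norm[OF False])
    finally have "(cmod (cinner z n))\<^sup>2 / (norm n)\<^sup>2 \<le> 0" by simp
    moreover have "(norm n)\<^sup>2 > 0" using False by simp
    ultimately have "(cmod (cinner z n))\<^sup>2 \<le> 0" by (simp add: divide_le_0_iff)
    then show ?thesis by simp
  qed
  have z0: "z \<noteq> 0" using z1 phi0 by auto
  define w where "w = complex_of_real (1 / (norm z)\<^sup>2) *\<^sub>C z"
  show ?thesis
  proof (intro exI allI)
    fix x
    have "\<phi> (x - \<phi> x *\<^sub>C z) = 0" by (simp add: diff sc z1)
    then have "cinner z (x - \<phi> x *\<^sub>C z) = 0" by (rule orth)
    then have "cinner z x = cnj (\<phi> x) * cinner z z"
      by (simp add: cinner_diff_right cinner_scaleC_right)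
    then have "cinner z x = cnj (\<phi> x) * complex_of_real ((norm z)\<^sup>2)" by (simp add: cinner_self)
    then have "cinner x z = \<phi> x * complex_of_real ((norm z)\<^sup>2)"
      using cinner_commute[of x z] by simp
    then show "\<phi> x = cinner x w" using z0
      by (simp add: w_def cinner_scaleC_right)
  qed
qed

lemma bounded_nonneg:
  assumes "bounded_clinear_op T"
  shows "\<exists>B\<ge>0. \<forall>x. norm (T x) \<le> B * norm x"
proof -
  obtain B where B: "\<And>x. norm (T x) \<le> B * norm x" using assms unfolding bounded_clinear_op_def by blast
  have "norm (T x) \<le> max B 0 * norm x" for x
    using B[of x] mult_right_mono[of B "max B 0" "norm x"] by simp
  then show ?thesis by (intro exI[of _ "max B 0"]) simp
qed

lemma adjoint_exists:
  fixes T :: "'a::chilbert_space \<Rightarrow> 'a"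
  assumes "bounded_clinear_op T"
  shows "\<exists>A. is_adjoint T A"
proof -
  obtain B where B0: "B \<ge> 0" and B: "\<And>x. norm (T x) \<le> B * norm x"
    using bounded_nonneg[OF assms] by blast
  have add: "T (x + y) = T x + T y" and sc: "T (c *\<^sub>C x) = c *\<^sub>C T x" for x y c
    using assms unfolding bounded_clinear_op_def by blast+
  have "\<exists>w. \<forall>x. cinner (T x) y = cinner x w" for y
  proof (rule riesz[where B = "B * norm y"])
    show "cinner (T (x1 + x2)) y = cinner (T x1) y + cinner (T x2) y" for x1 x2
      by (simp add: add cinner_add_left)
    show "cinner (T (c *\<^sub>C x)) y = c * cinner (T x) y" for c x
      by (simp add: sc cinner_scaleC_left)
    show "cmod (cinner (T x) y) \<le> B * norm y * norm x" for x
    proof -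
      have "cmod (cinner (T x) y) \<le> norm (T x) * norm y" by (rule cauchy_schwarz)
      also have "\<dots> \<le> (B * norm x) * norm y" by (rule mult_right_mono[OF B]) simp
      finally show ?thesis by (simp add: ac_simps)
    qed
  qed
  then have "\<forall>y. \<exists>w. \<forall>x. cinner (T x) y = cinner x w" by blast
  then obtain A where "\<forall>y. \<forall>x. cinner (T x) y = cinner x (A y)" by metis
  then show ?thesis unfolding is_adjoint_def by blast
qed

lemma scaleC_minus_left: "(- c) *\<^sub>C (x::'a::complex_vector) = - (c *\<^sub>C x)"
proof -
  have "(- c) *\<^sub>C x = ((-1) * c) *\<^sub>C x" by simp
  also have "\<dots> = (-1) *\<^sub>C (c *\<^sub>C x)" by (simp only: scaleC_scaleC)
  also have "\<dots> = - (c *\<^sub>C x)" by (rule scaleC_minus1)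
  finally show ?thesis .
qed

lemma adjoint_linear:
  fixes K A :: "'a::complex_inner \<Rightarrow> 'a"
  assumes "is_adjoint K A"
  shows "A (a + c *\<^sub>C b) = A a + c *\<^sub>C A b"
proof (rule cinner_ext)
  fix x
  have "cinner x (A (a + c *\<^sub>C b)) = cinner (K x) (a + c *\<^sub>C b)"
    using assms unfolding is_adjoint_def by simp
  also have "\<dots> = cinner (K x) a + cnj c * cinner (K x) b"
    by (simp add: cinner_add_right cinner_scaleC_right)
  also have "\<dots> = cinner x (A a) + cnj c * cinner x (A b)"
    using assms unfolding is_adjoint_def by simp
  also have "\<dots> = cinner x (A a + c *\<^sub>C A b)"
    by (simp add: cinner_add_right cinner_scaleC_right)
  finally show "cinner x (A (a + c *\<^sub>C b)) = cinner x (A a + c *\<^sub>C A b)" .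
qed

lemma cnorm_expand:
  fixes x y :: "'a::complex_inner"
  shows "complex_of_real ((norm (x + c *\<^sub>C y))\<^sup>2)
     = cinner x x + cnj c * cinner x y + c * cinner y x + c * cnj c * cinner y y"
proof -
  have "complex_of_real ((norm (x + c *\<^sub>C y))\<^sup>2) = cinner (x + c *\<^sub>C y) (x + c *\<^sub>C y)"
    by (rule cinner_self[symmetric])
  also have "\<dots> = cinner x x + cnj c * cinner x y + c * cinner y x + c * cnj c * cinner y y"
    by (simp add: cinner_add_left cinner_add_right cinner_scaleC_left cinner_scaleC_right algebra_simps)
  finally show ?thesis .
qed

lemma polar_vec:
  fixes x y :: "'a::complex_inner"
  shows "cinner x y = (complex_of_real ((norm (x + 1 *\<^sub>C y))\<^sup>2)
      - complex_of_real ((norm (x + (-1) *\<^sub>C y))\<^sup>2)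
      + \<i> * complex_of_real ((norm (x + \<i> *\<^sub>C y))\<^sup>2)
      - \<i> * complex_of_real ((norm (x + (-\<i>) *\<^sub>C y))\<^sup>2)) / 4"
  by (simp only: cnorm_expand) (simp add: algebra_simps)

lemma polar_scalar:
  fixes a b :: complex
  shows "a * cnj b = (complex_of_real ((cmod (a + 1 * b))\<^sup>2)
      - complex_of_real ((cmod (a + (-1) * b))\<^sup>2)
      + \<i> * complex_of_real ((cmod (a + \<i> * b))\<^sup>2)
      - \<i> * complex_of_real ((cmod (a + (-\<i>) * b))\<^sup>2)) / 4"
  by (simp only: cmod_power2) (simp add: complex_eq_iff power2_eq_square algebra_simps)

lemma int4:
  fixes f1 f2 f3 f4 :: "'a \<Rightarrow> complex"
  assumes "integrable M f1" "integrable M f2" "integrable M f3" "integrable M f4"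
  shows "(\<integral>x. (f1 x - f2 x + \<i> * f3 x - \<i> * f4 x) / 4 \<partial>M)
    = (integral\<^sup>L M f1 - integral\<^sup>L M f2 + \<i> * integral\<^sup>L M f3 - \<i> * integral\<^sup>L M f4) / 4"
  using assms by simp

theorem lemma3p2:
  fixes M :: "'w measure"
    and K Ks Kd :: "'h::chilbert_space \<Rightarrow> 'h"
    and F :: "'w \<Rightarrow> 'h"
  assumes "separable_space (euclidean :: 'h topology)"
    and "bounded_clinear_op K"
    and "closed (range K)"
    and "is_adjoint K Ks"
    and "is_MP_pseudo_inverse K Kd"
    and "parseval_cont_K_frame M Ks F"
  shows "dual_cont_K_bessel M K F (\<lambda>\<omega>. Kd (F \<omega>))"
proof -
  have Kb: "bounded_clinear_op K" by fact
  have adjK: "\<And>x y. cinner (K x) y = cinner x (Ks y)" using assms(4) unfolding is_adjoint_def by blast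
  have Kdb: "bounded_clinear_op Kd" and KKdK: "K \<circ> Kd \<circ> K = K"
    and saKdK: "self_adjoint (Kd \<circ> K)"
    using assms(5) unfolding is_MP_pseudo_inverse_def by blast+
  have wmF: "weakly_measurable M F" and pars:
    "\<And>f. (\<integral>\<^sup>+\<omega>. ennreal ((cmod (cinner f (F \<omega>)))\<^sup>2) \<partial>M) = ennreal ((norm (Ks f))\<^sup>2)"
    using assms(6) unfolding parseval_cont_K_frame_def by blast+
  have measF: "(\<lambda>\<omega>. cinner f (F \<omega>)) \<in> borel_measurable M" for f
    using wmF unfolding weakly_measurable_def by blast
  obtain Kds where adjKd: "is_adjoint Kd Kds" using adjoint_exists[OF Kdb] by blast
  have adjKd': "\<And>x y. cinner (Kd x) y = cinner x (Kds y)" using adjKd unfolding is_adjoint_def by blast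
  have key1: "cinner f (Kd y) = cinner (Kds f) y" for f y
  proof -
    have "cinner f (Kd y) = cnj (cinner (Kd y) f)" by (rule cinner_commute)
    also have "\<dots> = cnj (cinner y (Kds f))" by (simp add: adjKd')
    also have "\<dots> = cinner (Kds f) y" by (simp only: cinner_commute[of "Kds f" y])
    finally show ?thesis .
  qed
  have KdK: "\<And>x y. cinner (Kd (K x)) y = cinner x (Kd (K y))"
    using saKdK unfolding self_adjoint_def is_adjoint_def by simp
  have KsKds: "Ks (Kds f) = Kd (K f)" for f
  proof (rule cinner_ext)
    fix x
    show "cinner x (Ks (Kds f)) = cinner x (Kd (K f))"
      by (simp add: adjK[symmetric] adjKd'[symmetric] KdK)
  qed
  have KKdK': "K (Kd (K f)) = K f" for f using fun_cong[OF KKdK, of f] by simp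
  obtain BK where BK0: "BK \<ge> 0" and BK: "\<And>x. norm (K x) \<le> BK * norm x"
    using bounded_nonneg[OF Kb] by blast
  obtain BD where BD0: "BD \<ge> 0" and BD: "\<And>x. norm (Kd x) \<le> BD * norm x"
    using bounded_nonneg[OF Kdb] by blast
  have G_eq: "(\<lambda>\<omega>. cinner f (Kd (F \<omega>))) = (\<lambda>\<omega>. cinner (Kds f) (F \<omega>))" for f
    by (simp add: key1)
  have wmG: "weakly_measurable M (\<lambda>\<omega>. Kd (F \<omega>))"
    unfolding weakly_measurable_def G_eq using measF by blast
  have bessel: "cont_bessel M (\<lambda>\<omega>. Kd (F \<omega>))"
    unfolding cont_bessel_def
  proof (intro conjI wmG exI[of _ "(BD * BK)\<^sup>2 + 1"] allI)
    show "0 < (BD * BK)\<^sup>2 + 1" by (simp add: add_nonneg_pos)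
    fix f
    have "norm (Kd (K f)) \<le> BD * (BK * norm f)"
      using BD[of "K f"] mult_left_mono[OF BK[of f] BD0] by linarith
    then have n1: "norm (Kd (K f)) \<le> (BD * BK) * norm f" by (simp add: ac_simps)
    have "(norm (Kd (K f)))\<^sup>2 \<le> ((BD * BK) * norm f)\<^sup>2"
      using n1 by (intro power_mono) simp_all
    also have "\<dots> \<le> ((BD * BK)\<^sup>2 + 1) * (norm f)\<^sup>2"
      by (simp add: power_mult_distrib algebra_simps)
    finally have le: "(norm (Kd (K f)))\<^sup>2 \<le> ((BD * BK)\<^sup>2 + 1) * (norm f)\<^sup>2" .
    have "(\<integral>\<^sup>+\<omega>. ennreal ((cmod (cinner f (Kd (F \<omega>))))\<^sup>2) \<partial>M)
        = (\<integral>\<^sup>+\<omega>. ennreal ((cmod (cinner (Kds f) (F \<omega>)))\<^sup>2) \<partial>M)" by (simp add: key1)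
    also have "\<dots> = ennreal ((norm (Kd (K f)))\<^sup>2)" by (simp add: pars KsKds)
    also have "\<dots> \<le> ennreal (((BD * BK)\<^sup>2 + 1) * (norm f)\<^sup>2)" using le by (rule ennreal_leI)
    finally show "(\<integral>\<^sup>+\<omega>. ennreal ((cmod (cinner f (Kd (F \<omega>))))\<^sup>2) \<partial>M)
        \<le> ennreal (((BD * BK)\<^sup>2 + 1) * (norm f)\<^sup>2)" .
  qed
  define Q where "Q u \<omega> = (cmod (cinner u (F \<omega>)))\<^sup>2" for u \<omega>
  have Qmeas: "Q u \<in> borel_measurable M" for u
    unfolding Q_def[abs_def] using measF[of u] by measurable
  have Qint: "integrable M (Q u)" for u
  proof (rule integrableI_nonneg)
    show "Q u \<in> borel_measurable M" by (rule Qmeas)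
    show "AE x in M. 0 \<le> Q u x" by (simp add: Q_def)
    show "(\<integral>\<^sup>+x. ennreal (Q u x) \<partial>M) < \<infinity>" by (simp add: Q_def pars)
  qed
  have Qval: "integral\<^sup>L M (Q u) = (norm (Ks u))\<^sup>2" for u
  proof -
    have "integral\<^sup>L M (Q u) = enn2real (\<integral>\<^sup>+x. ennreal (Q u x) \<partial>M)"
      by (rule integral_eq_nn_integral[OF Qmeas]) (simp add: Q_def)
    also have "\<dots> = (norm (Ks u))\<^sup>2" by (simp add: Q_def pars)
    finally show ?thesis .
  qed
  have Ks_lin: "Ks (a + c *\<^sub>C b) = Ks a + c *\<^sub>C Ks b" for a b c
    by (rule adjoint_linear[OF assms(4)])
  have wir: "weak_integral_repr M K F (\<lambda>\<omega>. Kd (F \<omega>))"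
    unfolding weak_integral_repr_def
  proof (intro allI)
    fix f h
    define g where "g = Kds f"
    let ?q = "\<lambda>c \<omega>. complex_of_real (Q (g + c *\<^sub>C h) \<omega>)"
    have cexp: "cinner (g + c *\<^sub>C h) (F \<omega>) = cinner g (F \<omega>) + c * cinner h (F \<omega>)" for c \<omega>
      by (simp add: cinner_add_left cinner_scaleC_left)
    have pt: "cinner f (Kd (F \<omega>)) * cinner (F \<omega>) h
       = (?q 1 \<omega> - ?q (-1) \<omega> + \<i> * ?q \<i> \<omega> - \<i> * ?q (-\<i>) \<omega>) / 4" for \<omega>
    proof -
      have "cinner f (Kd (F \<omega>)) * cinner (F \<omega>) h = cinner g (F \<omega>) * cnj (cinner h (F \<omega>))"
        by (simp add: key1 g_def cinner_commute[of "F \<omega>" h])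
      also have "\<dots> = (?q 1 \<omega> - ?q (-1) \<omega> + \<i> * ?q \<i> \<omega> - \<i> * ?q (-\<i>) \<omega>) / 4"
        unfolding Q_def cexp by (rule polar_scalar)
      finally show ?thesis .
    qed
    have fun_eq: "(\<lambda>\<omega>. cinner f (Kd (F \<omega>)) * cinner (F \<omega>) h)
       = (\<lambda>\<omega>. (?q 1 \<omega> - ?q (-1) \<omega> + \<i> * ?q \<i> \<omega> - \<i> * ?q (-\<i>) \<omega>) / 4)"
      using pt by blast
    have qi: "integrable M (?q c)" for c using Qint by blast
    have sumI: "integrable M (\<lambda>\<omega>. ?q 1 \<omega> - ?q (-1) \<omega> + \<i> * ?q \<i> \<omega> - \<i> * ?q (-\<i>) \<omega>)"
      using qi[of 1] qi[of "-1"] qi[of "\<i>"] qi[of "-\<i>"] by simp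
    show "integrable M (\<lambda>\<omega>. cinner f (Kd (F \<omega>)) * cinner (F \<omega>) h) \<and>
          cinner (K f) h = (\<integral>\<omega>. cinner f (Kd (F \<omega>)) * cinner (F \<omega>) h \<partial>M)"
    proof
      show "integrable M (\<lambda>\<omega>. cinner f (Kd (F \<omega>)) * cinner (F \<omega>) h)"
        unfolding fun_eq by (rule integrable_divide_zero[OF sumI])
      have "(\<integral>\<omega>. cinner f (Kd (F \<omega>)) * cinner (F \<omega>) h \<partial>M)
        = (complex_of_real ((norm (Ks (g + 1 *\<^sub>C h)))\<^sup>2)
          - complex_of_real ((norm (Ks (g + (-1) *\<^sub>C h)))\<^sup>2)
          + \<i> * complex_of_real ((norm (Ks (g + \<i> *\<^sub>C h)))\<^sup>2)
          - \<i> * complex_of_real ((norm (Ks (g + (-\<i>) *\<^sub>C h)))\<^sup>2)) / 4"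
        unfolding fun_eq int4[OF qi qi qi qi] by (simp only: integral_complex_of_real Qval)
      also have "\<dots> = cinner (Ks g) (Ks h)"
        unfolding Ks_lin by (rule polar_vec[symmetric])
      also have "\<dots> = cinner (K (Ks g)) h" by (simp add: adjK)
      also have "\<dots> = cinner (K f) h" by (simp add: g_def KsKds KKdK')
      finally show "cinner (K f) h = (\<integral>\<omega>. cinner f (Kd (F \<omega>)) * cinner (F \<omega>) h \<partial>M)" by simp
    qed
  qed
  show ?thesis unfolding dual_cont_K_bessel_def using bessel wir by blast
qed

end
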